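(* Under the hypotheses of the stable-fixed-point theorem (Assumptions (A1), (A2)), let $q^\ast\in\mathbb S^\circ$ satisfy $\nabla\ell(p,q^\ast|x)=\mathbf 1$, and let $$B=-\mathrm{diag}(q^\ast)\,\nabla^2\ell(p,q^\ast|x)=\frac1{2M}\sum_{m=1}^M\sum_{i=1}^I x_{im}\frac{\mathrm{diag}(q^\ast)\,p_{\cdot im}p_{\cdot im}^\top}{\langle q^\ast,p_{\cdot im}\rangle^2}.$$ Then $B$ has nonnegative entries, $\mathbf 1^\top B=\mathbf 1^\top$ (so $B^\top$ is a stochastic matrix), $Bq^\ast=q^\ast$, and all eigenvalues of $B$ are real and lie in $(0,1]$. Consequently the Jacobian $\nabla L(p,q^\ast|x)=E_K-B$ has all eigenvalues in $[0,1)$.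
   Context: $\mathbb S^\circ=\{q\in\mathbb R^K: q_k>0,\ \sum_kq_k=1\}$; $p\in\mathbb S_I^{K\times M}$ (each $p_{k\cdot m}=(p_{kim})_i$ a probability vector), $p_{\cdot im}=(p_{kim})_{k=1}^K$; $x\in\{0,1,2\}^{I\times M}$ with $\sum_ix_{im}=2$; $\mathbf 1=(1,\dots,1)^\top$; $E_K$ the identity matrix. $\ell(p,q|x)=\frac1{2M}\sum_m\big(\log\frac{2!}{\prod_ix_{im}!}+\sum_ix_{im}\log\langle q,p_{\cdot im}\rangle\big)$, with gradient $\nabla\ell(p,q|x)=\frac1{2M}\sum_{m,i}x_{im}\frac{p_{\cdot im}}{\langle q,p_{\cdot im}\rangle}$ and Hessian $\nabla^2\ell(p,q|x)=-\frac1{2M}\sum_{m,i}x_{im}\frac{p_{\cdot im}p_{\cdot im}^\top}{\langle q,p_{\cdot im}\rangle^2}$. $L(p,q|x)=\mathrm{diag}(q)\nabla\ell(p,q|x)$, whose Jacobian is $\mathrm{diag}(\nabla\ell(p,q|x))+\mathrm{diag}(q)\nabla^2\ell(p,q|x)$. Assumption (A1): whenever $x_{im}>0$ there is some $k$ with $p_{kim}>0$. Assumption (A2): for every $s\in\mathbb R^K\setminus\{0\}$ with $\langle s,\mathbf 1\rangle=0$ there exist $i,m$ with $x_{im}>0$ and $\langle s,p_{\cdot im}\rangle\neq0$. *)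

theory Defs
  imports Complex_Main "Jordan_Normal_Form.Char_Poly"
begin

text \<open>Indices: k in {0..<K} (components), i in {0..<I}, m in {0..<M}.
  p k i m stands for p_{kim}, x i m for x_{im}, q k for q_k.\<close>

definition qdot :: "nat \<Rightarrow> (nat \<Rightarrow> real) \<Rightarrow> (nat \<Rightarrow> nat \<Rightarrow> nat \<Rightarrow> real) \<Rightarrow> nat \<Rightarrow> nat \<Rightarrow> real" where
  "qdot K q p i m = (\<Sum>k<K. q k * p k i m)"

definition grad_ell :: "nat \<Rightarrow> nat \<Rightarrow> nat \<Rightarrow> (nat \<Rightarrow> nat \<Rightarrow> nat \<Rightarrow> real) \<Rightarrow> (nat \<Rightarrow> real)
    \<Rightarrow> (nat \<Rightarrow> nat \<Rightarrow> nat) \<Rightarrow> nat \<Rightarrow> real" where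
  "grad_ell K I M p q x k =
     1 / (2 * real M) * (\<Sum>m<M. \<Sum>i<I. real (x i m) * p k i m / qdot K q p i m)"

definition hess_ell :: "nat \<Rightarrow> nat \<Rightarrow> nat \<Rightarrow> (nat \<Rightarrow> nat \<Rightarrow> nat \<Rightarrow> real) \<Rightarrow> (nat \<Rightarrow> real)
    \<Rightarrow> (nat \<Rightarrow> nat \<Rightarrow> nat) \<Rightarrow> nat \<Rightarrow> nat \<Rightarrow> real" where
  "hess_ell K I M p q x k j =
     - (1 / (2 * real M)) * (\<Sum>m<M. \<Sum>i<I. real (x i m) * p k i m * p j i m / (qdot K q p i m)\<^sup>2)"

definition Bmat :: "nat \<Rightarrow> nat \<Rightarrow> nat \<Rightarrow> (nat \<Rightarrow> nat \<Rightarrow> nat \<Rightarrow> real) \<Rightarrow> (nat \<Rightarrow> real)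
    \<Rightarrow> (nat \<Rightarrow> nat \<Rightarrow> nat) \<Rightarrow> real mat" where
  "Bmat K I M p q x = mat K K (\<lambda>(k, j). - (q k * hess_ell K I M p q x k j))"

text \<open>Jacobian of L = diag(q) grad: diag(grad) + diag(q) * Hessian\<close>
definition JacL :: "nat \<Rightarrow> nat \<Rightarrow> nat \<Rightarrow> (nat \<Rightarrow> nat \<Rightarrow> nat \<Rightarrow> real) \<Rightarrow> (nat \<Rightarrow> real)
    \<Rightarrow> (nat \<Rightarrow> nat \<Rightarrow> nat) \<Rightarrow> real mat" where
  "JacL K I M p q x = mat K K (\<lambda>(k, j).
      (if k = j then grad_ell K I M p q x k else 0) + q k * hess_ell K I M p q x k j)"

end

theory Submission
  imports Defs
begin

lemma colsum_aux:
  fixes K I M :: nat and p :: "nat \<Rightarrow> nat \<Rightarrow> nat \<Rightarrow> real" and x :: "nat \<Rightarrow> nat \<Rightarrow> nat" and q :: "nat \<Rightarrow> real"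
  shows "(\<Sum>k<K. q k * (1/(2*real M) * (\<Sum>m<M. \<Sum>i<I. real (x i m) * p k i m * p j i m / (qdot K q p i m)^2)))
     = grad_ell K I M p q x j"
proof -
  have "(\<Sum>k<K. q k * (1/(2*real M) * (\<Sum>m<M. \<Sum>i<I. real (x i m) * p k i m * p j i m / (qdot K q p i m)^2)))
      = 1/(2*real M) * (\<Sum>m<M. \<Sum>i<I. \<Sum>k<K. q k * (real (x i m) * p k i m * p j i m / (qdot K q p i m)^2))"
    by (simp add: sum_distrib_left sum.swap[of _ "{..<K}"] mult.left_commute)
  also have "\<dots> = 1/(2*real M) * (\<Sum>m<M. \<Sum>i<I. real (x i m) * p j i m / qdot K q p i m)"
  proof -
    have "(\<Sum>k<K. q k * (real (x i m) * p k i m * p j i m / (qdot K q p i m)^2)) = real (x i m) * p j i m / qdot K q p i m" for i m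
    proof -
      have "(\<Sum>k<K. q k * (real (x i m) * p k i m * p j i m / (qdot K q p i m)^2))
          = (real (x i m) * p j i m / (qdot K q p i m)^2) * qdot K q p i m"
        unfolding qdot_def by (simp add: sum_distrib_left sum_divide_distrib mult_ac)
      also have "\<dots> = real (x i m) * p j i m / qdot K q p i m"
        by (cases "qdot K q p i m = 0") (simp_all add: power2_eq_square)
      finally show ?thesis .
    qed
    then show ?thesis by simp
  qed
  finally show ?thesis by (simp add: grad_ell_def)
qed

lemma Bq_aux:
  fixes K I M :: nat and p :: "nat \<Rightarrow> nat \<Rightarrow> nat \<Rightarrow> real" and x :: "nat \<Rightarrow> nat \<Rightarrow> nat" and q :: "nat \<Rightarrow> real"
  shows "(\<Sum>j<K. (1/(2*real M) * (\<Sum>m<M. \<Sum>i<I. real (x i m) * p k i m * p j i m / (qdot K q p i m)^2)) * q j)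
     = grad_ell K I M p q x k"
proof -
  have "(\<Sum>j<K. (1/(2*real M) * (\<Sum>m<M. \<Sum>i<I. real (x i m) * p k i m * p j i m / (qdot K q p i m)^2)) * q j)
      = 1/(2*real M) * (\<Sum>m<M. \<Sum>i<I. \<Sum>j<K. q j * (real (x i m) * p k i m * p j i m / (qdot K q p i m)^2))"
    by (simp add: sum_distrib_left sum_distrib_right sum.swap[of _ "{..<K}"] mult_ac)
  also have "\<dots> = 1/(2*real M) * (\<Sum>m<M. \<Sum>i<I. real (x i m) * p k i m / qdot K q p i m)"
  proof -
    have "(\<Sum>j<K. q j * (real (x i m) * p k i m * p j i m / (qdot K q p i m)^2)) = real (x i m) * p k i m / qdot K q p i m" for i m
    proof -
      have "(\<Sum>j<K. q j * (real (x i m) * p k i m * p j i m / (qdot K q p i m)^2))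
          = (real (x i m) * p k i m / (qdot K q p i m)^2) * qdot K q p i m"
        unfolding qdot_def by (simp add: sum_distrib_left sum_divide_distrib mult_ac)
      also have "\<dots> = real (x i m) * p k i m / qdot K q p i m"
        by (cases "qdot K q p i m = 0") (simp_all add: power2_eq_square)
      finally show ?thesis .
    qed
    then show ?thesis by simp
  qed
  finally show ?thesis by (simp add: grad_ell_def)
qed

lemma swap4:
  "(\<Sum>k\<in>A. \<Sum>j\<in>A. \<Sum>m\<in>B. \<Sum>i\<in>C. f k j m i) = (\<Sum>m\<in>B. \<Sum>i\<in>C. \<Sum>k\<in>A. \<Sum>j\<in>A. f k j m i)"
proof -
  have "(\<Sum>k\<in>A. \<Sum>j\<in>A. \<Sum>m\<in>B. \<Sum>i\<in>C. f k j m i) = (\<Sum>k\<in>A. \<Sum>m\<in>B. \<Sum>j\<in>A. \<Sum>i\<in>C. f k j m i)"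
    by (rule sum.cong[OF refl], rule sum.swap)
  also have "\<dots> = (\<Sum>m\<in>B. \<Sum>k\<in>A. \<Sum>j\<in>A. \<Sum>i\<in>C. f k j m i)" by (rule sum.swap)
  also have "\<dots> = (\<Sum>m\<in>B. \<Sum>k\<in>A. \<Sum>i\<in>C. \<Sum>j\<in>A. f k j m i)"
    by (rule sum.cong[OF refl], rule sum.cong[OF refl], rule sum.swap)
  also have "\<dots> = (\<Sum>m\<in>B. \<Sum>i\<in>C. \<Sum>k\<in>A. \<Sum>j\<in>A. f k j m i)"
    by (rule sum.cong[OF refl], rule sum.swap)
  finally show ?thesis .
qed

lemma rayleigh:
  fixes a :: "nat \<Rightarrow> nat \<Rightarrow> real" and p :: "nat \<Rightarrow> nat \<Rightarrow> nat \<Rightarrow> real" and v :: "nat \<Rightarrow> complex"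
  shows "(\<Sum>k<K. cnj (v k) * (\<Sum>j<K. of_real (\<Sum>m<M. \<Sum>i<I. a i m * p k i m * p j i m) * v j))
    = of_real (\<Sum>m<M. \<Sum>i<I. a i m * (cmod (\<Sum>j<K. of_real (p j i m) * v j))^2)"
proof -
  have "(\<Sum>k<K. cnj (v k) * (\<Sum>j<K. of_real (\<Sum>m<M. \<Sum>i<I. a i m * p k i m * p j i m) * v j))
    = (\<Sum>k<K. \<Sum>j<K. \<Sum>m<M. \<Sum>i<I. of_real (a i m) * (of_real (p k i m) * cnj (v k)) * (of_real (p j i m) * v j))"
    by (simp add: sum_distrib_left sum_distrib_right mult_ac)
  also have "\<dots> = (\<Sum>m<M. \<Sum>i<I. \<Sum>k<K. \<Sum>j<K. of_real (a i m) * (of_real (p k i m) * cnj (v k)) * (of_real (p j i m) * v j))"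
    by (rule swap4)
  also have "\<dots> = (\<Sum>m<M. \<Sum>i<I. of_real (a i m) * (cnj (\<Sum>j<K. of_real (p j i m) * v j) * (\<Sum>j<K. of_real (p j i m) * v j)))"
    by (simp add: sum_distrib_left sum_distrib_right mult_ac)
  also have "\<dots> = of_real (\<Sum>m<M. \<Sum>i<I. a i m * (cmod (\<Sum>j<K. of_real (p j i m) * v j))^2)"
  proof -
    have e: "\<And>z. cnj z * z = complex_of_real ((cmod z)^2)" using complex_norm_square by (metis mult.commute)
    show ?thesis by (simp only: e of_real_sum of_real_mult)
  qed
  finally show ?thesis .
qed
lemma eig_core:
  fixes a H :: "nat \<Rightarrow> nat \<Rightarrow> real" and p :: "nat \<Rightarrow> nat \<Rightarrow> nat \<Rightarrow> real"
    and q :: "nat \<Rightarrow> real" and v :: "nat \<Rightarrow> complex" and \<mu> :: complex and x :: "nat \<Rightarrow> nat \<Rightarrow> nat"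
  assumes Hdef: "\<And>k j. H k j = (\<Sum>m<M. \<Sum>i<I. a i m * p k i m * p j i m)"
    and a_nn: "\<And>i m. i<I \<Longrightarrow> m<M \<Longrightarrow> 0 \<le> a i m"
    and a_pos: "\<And>i m. i<I \<Longrightarrow> m<M \<Longrightarrow> 0 < x i m \<Longrightarrow> 0 < a i m"
    and A2: "\<forall>s :: nat \<Rightarrow> real. (\<exists>k<K. s k \<noteq> 0) \<and> (\<Sum>k<K. s k) = 0 \<longrightarrow>
               (\<exists>i<I. \<exists>m<M. x i m > 0 \<and> (\<Sum>k<K. s k * p k i m) \<noteq> 0)"
    and q_pos: "\<forall>k<K. q k > 0"
    and colsum: "\<And>j. j<K \<Longrightarrow> (\<Sum>k<K. q k * H k j) = 1"
    and Hnn: "\<And>k j. k<K \<Longrightarrow> j<K \<Longrightarrow> 0 \<le> H k j"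
    and eig: "\<And>k. k<K \<Longrightarrow> (\<Sum>j<K. of_real (q k * H k j) * v j) = \<mu> * v k"
    and nz: "\<exists>k<K. v k \<noteq> 0"
  shows "\<exists>r. \<mu> = of_real r \<and> 0 < r \<and> r \<le> 1"
proof -
  define P where "P i m = (\<Sum>j<K. of_real (p j i m) * v j)" for i m
  define Qr where "Qr = (\<Sum>m<M. \<Sum>i<I. a i m * (cmod (P i m))^2)"
  define Sr where "Sr = (\<Sum>k<K. (cmod (v k))^2 / q k)"
  from nz obtain k0 where k0: "k0 < K" "v k0 \<noteq> 0" by blast
  have Sr_pos: "Sr > 0"
  proof -
    have "0 < (cmod (v k0))^2 / q k0" using k0 q_pos by auto
    also have "\<dots> \<le> Sr" unfolding Sr_def
      by (rule member_le_sum) (use k0 q_pos in auto)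
    finally show ?thesis .
  qed
  have Qr_nn: "Qr \<ge> 0" unfolding Qr_def
    by (intro sum_nonneg) (simp add: a_nn)
  have step1: "(\<Sum>j<K. of_real (H k j) * v j) = \<mu> * v k / of_real (q k)" if k: "k<K" for k
  proof -
    have "of_real (q k) * (\<Sum>j<K. of_real (H k j) * v j) = \<mu> * v k"
      using eig[OF k] by (simp add: sum_distrib_left mult.assoc)
    moreover have "q k \<noteq> 0" using q_pos k by auto
    ultimately show ?thesis by (simp add: field_simps)
  qed
  have e: "\<And>z. cnj z * z = complex_of_real ((cmod z)^2)" using complex_norm_square by (metis mult.commute)
  have "of_real Qr = (\<Sum>k<K. cnj (v k) * (\<Sum>j<K. of_real (H k j) * v j))"
    unfolding Hdef Qr_def P_def by (rule rayleigh[symmetric])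
  also have "\<dots> = (\<Sum>k<K. cnj (v k) * (\<mu> * v k / of_real (q k)))"
    by (rule sum.cong) (simp_all add: step1)
  also have "\<dots> = \<mu> * (\<Sum>k<K. (cnj (v k) * v k) / of_real (q k))"
    by (simp add: sum_distrib_left mult_ac)
  also have "\<dots> = \<mu> * of_real Sr"
    unfolding Sr_def by (simp add: e)
  finally have QS: "of_real Qr = \<mu> * of_real Sr" .
  define r where "r = Qr / Sr"
  have mu: "\<mu> = of_real r" using QS Sr_pos unfolding r_def by (simp add: field_simps)
  have r_nn: "r \<ge> 0" unfolding r_def using Qr_nn Sr_pos by simp
  have r_le: "r \<le> 1"
  proof -
    have "r * (\<Sum>k<K. cmod (v k)) = (\<Sum>k<K. cmod (\<mu> * v k))"
      using r_nn by (simp add: mu sum_distrib_left norm_mult)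
    also have "\<dots> = (\<Sum>k<K. cmod (\<Sum>j<K. of_real (q k * H k j) * v j))"
      by (rule sum.cong) (use eig in \<open>simp_all del: of_real_mult\<close>)
    also have "\<dots> \<le> (\<Sum>k<K. \<Sum>j<K. q k * H k j * cmod (v j))"
    proof (rule sum_mono)
      fix k assume "k \<in> {..<K}"
      hence k: "k < K" by simp
      have "cmod (\<Sum>j<K. of_real (q k * H k j) * v j) \<le> (\<Sum>j<K. cmod (of_real (q k * H k j) * v j))"
        by (rule norm_sum)
      also have "\<dots> = (\<Sum>j<K. q k * H k j * cmod (v j))"
        apply (rule sum.cong, simp)
        using k q_pos Hnn by (simp add: norm_mult abs_mult less_imp_le)
      finally show "cmod (\<Sum>j<K. of_real (q k * H k j) * v j) \<le> (\<Sum>j<K. q k * H k j * cmod (v j))" .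
    qed
    also have "\<dots> = (\<Sum>j<K. (\<Sum>k<K. q k * H k j) * cmod (v j))"
      by (subst sum.swap) (simp add: sum_distrib_right)
    also have "\<dots> = (\<Sum>j<K. cmod (v j))"
      by (rule sum.cong) (simp_all add: colsum)
    finally have "r * (\<Sum>k<K. cmod (v k)) \<le> (\<Sum>k<K. cmod (v k))" .
    moreover have "(\<Sum>k<K. cmod (v k)) > 0"
    proof -
      have "0 < cmod (v k0)" using k0 by simp
      also have "\<dots> \<le> (\<Sum>k<K. cmod (v k))" by (rule member_le_sum) (use k0 in auto)
      finally show ?thesis .
    qed
    ultimately show ?thesis by (metis mult_le_cancel_right2 not_less)
  qed
  have r_pos: "r > 0"
  proof (rule ccontr)
    assume "\<not> r > 0"
    hence r0: "r = 0" using r_nn by simp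
    hence "Qr = 0" unfolding r_def using Sr_pos by simp
    hence "\<forall>m\<in>{..<M}. (\<Sum>i<I. a i m * (cmod (P i m))^2) = 0" unfolding Qr_def
    proof -
      have nn: "\<And>m. m \<in> {..<M} \<Longrightarrow> 0 \<le> (\<Sum>i<I. a i m * (cmod (P i m))^2)"
        by (auto intro!: sum_nonneg simp: a_nn)
      show ?thesis using sum_nonneg_eq_0_iff[of "{..<M}" "\<lambda>m. (\<Sum>i<I. a i m * (cmod (P i m))^2)", OF _ nn] \<open>Qr = 0\<close> unfolding Qr_def by simp
    qed
    hence Z: "\<forall>m\<in>{..<M}. \<forall>i\<in>{..<I}. a i m * (cmod (P i m))^2 = 0"
    proof (intro ballI)
      fix m i assume h: "\<forall>m\<in>{..<M}. (\<Sum>i<I. a i m * (cmod (P i m))^2) = 0" and m: "m \<in> {..<M}" and i: "i \<in> {..<I}"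
      have nn: "\<And>i. i \<in> {..<I} \<Longrightarrow> 0 \<le> a i m * (cmod (P i m))^2" using m by (simp add: a_nn)
      show "a i m * (cmod (P i m))^2 = 0"
        using sum_nonneg_eq_0_iff[of "{..<I}" "\<lambda>i. a i m * (cmod (P i m))^2", OF _ nn] h m i by simp
    qed
    hence P0: "P i m = 0" if "i<I" "m<M" "0 < x i m" for i m
    proof -
      have "a i m * (cmod (P i m))^2 = 0" using Z that by simp
      thus ?thesis using a_pos[OF that] by simp
    qed
    have mu0: "\<mu> = 0" using mu r0 by simp
    have "(\<Sum>j<K. v j) = (\<Sum>j<K. (\<Sum>k<K. of_real (q k * H k j)) * v j)"
    proof (rule sum.cong)
      fix j assume "j \<in> {..<K}"
      hence "(\<Sum>k<K. complex_of_real (q k * H k j)) = 1" using colsum[of j] of_real_sum[of "\<lambda>k. q k * H k j" "{..<K}"] by simp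
      thus "v j = (\<Sum>k<K. complex_of_real (q k * H k j)) * v j" by simp
    qed simp
    also have "\<dots> = (\<Sum>k<K. \<Sum>j<K. of_real (q k * H k j) * v j)"
      by (subst sum.swap) (simp add: sum_distrib_right)
    also have "\<dots> = 0" using eig mu0 by simp
    finally have sv: "(\<Sum>j<K. v j) = 0" .
    have ReZ: "\<forall>k<K. Re (v k) = 0"
    proof (rule ccontr)
      assume "\<not> (\<forall>k<K. Re (v k) = 0)"
      moreover have "(\<Sum>k<K. Re (v k)) = 0" using arg_cong[OF sv, of Re] by (simp add: Re_sum)
      ultimately obtain i m where im: "i<I" "m<M" "x i m > 0" "(\<Sum>k<K. Re (v k) * p k i m) \<noteq> 0"
        using A2[rule_format, of "\<lambda>k. Re (v k)"] by blast
      have "(\<Sum>k<K. Re (v k) * p k i m) = Re (P i m)" unfolding P_def by (simp add: Re_sum mult.commute)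
      with P0[OF im(1-3)] im(4) show False by simp
    qed
    have ImZ: "\<forall>k<K. Im (v k) = 0"
    proof (rule ccontr)
      assume "\<not> (\<forall>k<K. Im (v k) = 0)"
      moreover have "(\<Sum>k<K. Im (v k)) = 0" using arg_cong[OF sv, of Im] by (simp add: Im_sum)
      ultimately obtain i m where im: "i<I" "m<M" "x i m > 0" "(\<Sum>k<K. Im (v k) * p k i m) \<noteq> 0"
        using A2[rule_format, of "\<lambda>k. Im (v k)"] by blast
      have "(\<Sum>k<K. Im (v k) * p k i m) = Im (P i m)" unfolding P_def by (simp add: Im_sum mult.commute)
      with P0[OF im(1-3)] im(4) show False by simp
    qed
    have "v k0 = 0" using ReZ ImZ k0 by (simp add: complex_eq_iff)
    with k0 show False by simp
  qed
  show ?thesis using mu r_pos r_le by blast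
qed


lemma eig_extract:
  fixes A :: "real mat"
  assumes A: "A \<in> carrier_mat K K" and ev: "eigenvalue (map_mat complex_of_real A) \<mu>"
  shows "\<exists>v. (\<exists>k<K. v k \<noteq> 0) \<and> (\<forall>k<K. (\<Sum>j<K. of_real (A $$ (k,j)) * v j) = \<mu> * v k)"
proof -
  from ev obtain w where w: "eigenvector (map_mat complex_of_real A) w \<mu>" unfolding eigenvalue_def by blast
  hence wc: "w \<in> carrier_vec K" and wnz: "w \<noteq> 0\<^sub>v K" and eq: "map_mat complex_of_real A *\<^sub>v w = \<mu> \<cdot>\<^sub>v w"
    using A unfolding eigenvector_def by auto
  have "\<exists>k<K. w $ k \<noteq> 0"
  proof (rule ccontr)
    assume "\<not> (\<exists>k<K. w $ k \<noteq> 0)"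
    hence "w = 0\<^sub>v K" using wc by (intro eq_vecI) auto
    with wnz show False by simp
  qed
  moreover have "(\<Sum>j<K. of_real (A $$ (k,j)) * w $ j) = \<mu> * w $ k" if k: "k<K" for k
  proof -
    have "(map_mat complex_of_real A *\<^sub>v w) $ k = (\<mu> \<cdot>\<^sub>v w) $ k" using eq by simp
    moreover have "(map_mat complex_of_real A *\<^sub>v w) $ k = (\<Sum>j<K. of_real (A $$ (k,j)) * w $ j)"
      using A wc k by (simp add: scalar_prod_def row_def lessThan_atLeast0)
    moreover have "(\<mu> \<cdot>\<^sub>v w) $ k = \<mu> * w $ k" using wc k by simp
    ultimately show ?thesis by simp
  qed
  ultimately show ?thesis by (intro exI[of _ "\<lambda>j. w $ j"]) auto
qed

theorem mainTheorem5:
  fixes K I M :: nat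
    and p :: "nat \<Rightarrow> nat \<Rightarrow> nat \<Rightarrow> real"
    and x :: "nat \<Rightarrow> nat \<Rightarrow> nat"
    and q :: "nat \<Rightarrow> real"
  assumes p_nonneg: "\<forall>k<K. \<forall>i<I. \<forall>m<M. 0 \<le> p k i m"
    and p_sum: "\<forall>k<K. \<forall>m<M. (\<Sum>i<I. p k i m) = 1"
    and x_range: "\<forall>i<I. \<forall>m<M. x i m \<le> 2"
    and x_sum: "\<forall>m<M. (\<Sum>i<I. x i m) = 2"
    and A1: "\<forall>i<I. \<forall>m<M. x i m > 0 \<longrightarrow> (\<exists>k<K. p k i m > 0)"
    and A2: "\<forall>s :: nat \<Rightarrow> real. (\<exists>k<K. s k \<noteq> 0) \<and> (\<Sum>k<K. s k) = 0 \<longrightarrow>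
               (\<exists>i<I. \<exists>m<M. x i m > 0 \<and> (\<Sum>k<K. s k * p k i m) \<noteq> 0)"
    and q_pos: "\<forall>k<K. q k > 0"
    and q_sum: "(\<Sum>k<K. q k) = 1"
    and fixpt: "\<forall>k<K. grad_ell K I M p q x k = 1"
  shows "(\<forall>k<K. \<forall>j<K. Bmat K I M p q x $$ (k, j) \<ge> 0)
    \<and> (\<forall>j<K. (\<Sum>k<K. Bmat K I M p q x $$ (k, j)) = 1)
    \<and> Bmat K I M p q x *\<^sub>v vec K q = vec K q
    \<and> (\<forall>\<mu>. eigenvalue (map_mat complex_of_real (Bmat K I M p q x)) \<mu> \<longrightarrow>
           (\<exists>r. \<mu> = complex_of_real r \<and> 0 < r \<and> r \<le> 1))
    \<and> JacL K I M p q x = 1\<^sub>m K - Bmat K I M p q x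
    \<and> (\<forall>\<mu>. eigenvalue (map_mat complex_of_real (JacL K I M p q x)) \<mu> \<longrightarrow>
           (\<exists>r. \<mu> = complex_of_real r \<and> 0 \<le> r \<and> r < 1))"
proof -
  define a where "a i m = 1/(2*real M) * real (x i m) / (qdot K q p i m)^2" for i m
  define H where "H k j = (\<Sum>m<M. \<Sum>i<I. a i m * p k i m * p j i m)" for k j
  have H2: "H k j = 1/(2*real M) * (\<Sum>m<M. \<Sum>i<I. real (x i m) * p k i m * p j i m / (qdot K q p i m)^2)" for k j
    unfolding H_def a_def by (simp add: sum_distrib_left)
  have Bent: "Bmat K I M p q x $$ (k,j) = q k * H k j" if "k<K" "j<K" for k j
    using that unfolding Bmat_def hess_ell_def H2 by simp
  have Bcar: "Bmat K I M p q x \<in> carrier_mat K K" unfolding Bmat_def by simp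
  have a_nn: "0 \<le> a i m" for i m unfolding a_def by simp
  have Hnn: "0 \<le> H k j" if "k<K" "j<K" for k j
    unfolding H_def using that p_nonneg a_nn
    by (intro sum_nonneg) (simp add: mult_nonneg_nonneg)
  have colsum: "(\<Sum>k<K. q k * H k j) = 1" if "j<K" for j
    unfolding H2 colsum_aux using fixpt that by simp
  have Bq: "(\<Sum>j<K. q k * H k j * q j) = q k" if "k<K" for k
  proof -
    have "(\<Sum>j<K. q k * H k j * q j) = q k * (\<Sum>j<K. H k j * q j)"
      by (simp add: sum_distrib_left mult_ac)
    also have "(\<Sum>j<K. H k j * q j) = 1" unfolding H2 Bq_aux using fixpt that by simp
    finally show ?thesis by simp
  qed
  have a_pos: "0 < a i m" if im: "i<I" "m<M" "0 < x i m" for i m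
  proof -
    obtain k where k: "k<K" "p k i m > 0" using A1 im by blast
    have "M > 0" using im by simp
    have "0 < q k * p k i m" using k q_pos by simp
    also have "\<dots> \<le> qdot K q p i m" unfolding qdot_def
      by (rule member_le_sum) (use k q_pos p_nonneg im in \<open>auto intro: mult_nonneg_nonneg less_imp_le\<close>)
    finally have "qdot K q p i m > 0" .
    thus ?thesis unfolding a_def using \<open>M>0\<close> im by simp
  qed
  have a_nn': "\<And>i m. i<I \<Longrightarrow> m<M \<Longrightarrow> 0 \<le> a i m" using a_nn by simp
  have core: "\<exists>r. \<mu> = of_real r \<and> 0 < r \<and> r \<le> 1"
    if "\<And>k. k<K \<Longrightarrow> (\<Sum>j<K. of_real (q k * H k j) * v j) = \<mu> * v k" "\<exists>k<K. v k \<noteq> 0" for \<mu> :: complex and v :: "nat \<Rightarrow> complex"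
    by (rule eig_core[OF H_def a_nn' a_pos A2 q_pos colsum Hnn that]) auto
  have P1: "\<forall>k<K. \<forall>j<K. Bmat K I M p q x $$ (k, j) \<ge> 0"
    using Bent Hnn q_pos by (simp add: less_imp_le)
  have P2: "\<forall>j<K. (\<Sum>k<K. Bmat K I M p q x $$ (k, j)) = 1"
    using Bent colsum by simp
  have P3: "Bmat K I M p q x *\<^sub>v vec K q = vec K q"
  proof (rule eq_vecI)
    fix k assume "k < dim_vec (vec K q)"
    hence k: "k<K" by simp
    have "(Bmat K I M p q x *\<^sub>v vec K q) $ k = (\<Sum>j<K. q k * H k j * q j)"
      using k Bcar Bent by (simp add: scalar_prod_def row_def lessThan_atLeast0)
    thus "(Bmat K I M p q x *\<^sub>v vec K q) $ k = vec K q $ k" using Bq k by simp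
  qed (use Bcar in simp)
  have P4: "\<forall>\<mu>. eigenvalue (map_mat complex_of_real (Bmat K I M p q x)) \<mu> \<longrightarrow>
           (\<exists>r. \<mu> = complex_of_real r \<and> 0 < r \<and> r \<le> 1)"
  proof (intro allI impI)
    fix \<mu> assume "eigenvalue (map_mat complex_of_real (Bmat K I M p q x)) \<mu>"
    from eig_extract[OF Bcar this] obtain v where v: "\<exists>k<K. v k \<noteq> 0"
      "\<forall>k<K. (\<Sum>j<K. of_real (Bmat K I M p q x $$ (k,j)) * v j) = \<mu> * v k" by blast
    show "\<exists>r. \<mu> = complex_of_real r \<and> 0 < r \<and> r \<le> 1"
      by (rule core[OF _ v(1)]) (use v(2) Bent in simp)
  qed
  have P5: "JacL K I M p q x = 1\<^sub>m K - Bmat K I M p q x"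
    by (rule eq_matI) (use fixpt Bent in \<open>auto simp: JacL_def Bmat_def hess_ell_def H2\<close>)
  have Jcar: "JacL K I M p q x \<in> carrier_mat K K" unfolding JacL_def by simp
  have P6: "\<forall>\<mu>. eigenvalue (map_mat complex_of_real (JacL K I M p q x)) \<mu> \<longrightarrow>
           (\<exists>r. \<mu> = complex_of_real r \<and> 0 \<le> r \<and> r < 1)"
  proof (intro allI impI)
    fix \<mu> assume "eigenvalue (map_mat complex_of_real (JacL K I M p q x)) \<mu>"
    from eig_extract[OF Jcar this] obtain v where v: "\<exists>k<K. v k \<noteq> 0"
      "\<forall>k<K. (\<Sum>j<K. of_real (JacL K I M p q x $$ (k,j)) * v j) = \<mu> * v k" by blast
    have "(\<Sum>j<K. of_real (q k * H k j) * v j) = (1 - \<mu>) * v k" if k: "k<K" for k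
    proof -
      have Jent: "JacL K I M p q x $$ (k,j) = (if k = j then 1 else 0) - q k * H k j" if "j<K" for j
        using k that Bent P5 Bcar by (simp add: carrier_matD)
      have "\<mu> * v k = (\<Sum>j<K. of_real ((if k = j then 1 else 0) - q k * H k j) * v j)"
        using v(2)[rule_format, OF k] Jent by (simp del: of_real_diff of_real_mult)
      also have "\<dots> = (\<Sum>j<K. (if k = j then v j else 0)) - (\<Sum>j<K. of_real (q k * H k j) * v j)"
      proof -
        have "\<And>j. of_real ((if k = j then 1 else 0) - q k * H k j) * v j
              = (if k = j then v j else 0) - of_real (q k * H k j) * v j"
          by (simp del: of_real_mult add: left_diff_distrib)
        thus ?thesis by (simp only: sum_subtractf)
      qed
      also have "(\<Sum>j<K. (if k = j then v j else 0)) = v k" using k by simp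
      finally show ?thesis by (simp add: algebra_simps)
    qed
    from core[OF this v(1)] obtain r where r: "1 - \<mu> = of_real r" "0 < r" "r \<le> 1" by blast
    show "\<exists>r. \<mu> = complex_of_real r \<and> 0 \<le> r \<and> r < 1"
      by (rule exI[of _ "1 - r"]) (use r in \<open>auto simp: algebra_simps\<close>)
  qed
  show ?thesis using P1 P2 P3 P4 P5 P6 by blast
qed

end
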